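(* Let $Q>0$, $\alpha>0$, $\beta\ge1$, and let the inverse demand function be $p(q)=\alpha(Q-q)^{\beta}$ for $0\le q\le Q$ and $p(q)=0$ for $q>Q$. Suppose the cost functions satisfy Assumptions 1, 3 and 4, and that there is a best supplier $k$ whose cost function is linear, $C_k(x)=cx$ with $0<c<\alpha Q^\beta$, and satisfies $C_k'(x)\le C_m'(x)$ for every supplier $m$ and every $x>0$. Then every Cournot equilibrium $\mathbf{x}$ satisfies $$\gamma(\mathbf{x})\ge f\!\left(\Big(\frac{p(0)}{c}\Big)^{(\beta-1)/\beta}\right)\quad\text{and}\quad \gamma(\mathbf{x})\ge f\!\left(\Big(\frac{p(X)}{c}\Big)^{(\beta-1)/\beta}\right),$$ where $X=\sum_n x_n$.
   Context: Cournot model: $N$ suppliers, inverse demand $p$, supplier $n$ has cost $C_n:[0,\infty)\to[0,\infty)$ and chooses $x_n\ge0$; $X=\sum_n x_n$; payoff of $n$ is $x_np(X)-C_n(x_n)$. A Cournot equilibrium is a profile $\mathbf{x}\ge0$ such that no supplier can increase its payoff by unilaterally changing its quantity to any $x\ge0$. $C_n'(0)$ is the right derivative at $0$. Assumption 1: each $C_n$ is convex, continuous, nondecreasing on $[0,\infty)$, continuously differentiable on $(0,\infty)$, with $C_n(0)=0$. Assumption 3: there exists $R>0$ such that $p(R)\le\min_n C_n'(0)$. Assumption 4: $p(0)>\min_n C_n'(0)$. Social welfare of $\mathbf{x}\ge0$: $W(\mathbf{x})=\int_0^X p(q)\,dq-\sum_{n=1}^N C_n(x_n)$; a social optimum $\mathbf{x}^S$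 maximizes $W$. Efficiency: $\gamma(\mathbf{x})=W(\mathbf{x})/W(\mathbf{x}^S)$. For $\overline c\ge1$: $f(\overline c)=\dfrac{\phi^2+2}{\phi^2+2\phi+\overline c}$ with $\phi=\max\left\{\dfrac{2-\overline c+\sqrt{\overline c^{\,2}-4\overline c+12}}{2},1\right\}$. *)

theory Defs
  imports "HOL-Analysis.Analysis"
begin

definition total :: "nat \<Rightarrow> (nat \<Rightarrow> real) \<Rightarrow> real" where
  "total N x = (\<Sum>n<N. x n)"

definition payoff :: "nat \<Rightarrow> (real \<Rightarrow> real) \<Rightarrow> (nat \<Rightarrow> real \<Rightarrow> real) \<Rightarrow> (nat \<Rightarrow> real) \<Rightarrow> nat \<Rightarrow> real" where
  "payoff N p C x n = x n * p (total N x) - C n (x n)"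

definition cournot_eq :: "nat \<Rightarrow> (real \<Rightarrow> real) \<Rightarrow> (nat \<Rightarrow> real \<Rightarrow> real) \<Rightarrow> (nat \<Rightarrow> real) \<Rightarrow> bool" where
  "cournot_eq N p C x \<longleftrightarrow> (\<forall>n<N. 0 \<le> x n) \<and>
     (\<forall>n<N. \<forall>y\<ge>0. payoff N p C (x(n := y)) n \<le> payoff N p C x n)"

definition welfare :: "nat \<Rightarrow> (real \<Rightarrow> real) \<Rightarrow> (nat \<Rightarrow> real \<Rightarrow> real) \<Rightarrow> (nat \<Rightarrow> real) \<Rightarrow> real" where
  "welfare N p C x = integral {0..total N x} p - (\<Sum>n<N. C n (x n))"

definition social_opt :: "nat \<Rightarrow> (real \<Rightarrow> real) \<Rightarrow> (nat \<Rightarrow> real \<Rightarrow> real) \<Rightarrow> (nat \<Rightarrow> real) \<Rightarrow> bool" where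
  "social_opt N p C xS \<longleftrightarrow> (\<forall>n<N. 0 \<le> xS n) \<and>
     (\<forall>y. (\<forall>n<N. 0 \<le> y n) \<longrightarrow> welfare N p C y \<le> welfare N p C xS)"

definition rderiv0 :: "(real \<Rightarrow> real) \<Rightarrow> real" where
  "rderiv0 f = (THE d. (f has_real_derivative d) (at_right 0))"

definition assm1 :: "(real \<Rightarrow> real) \<Rightarrow> bool" where
  "assm1 f \<longleftrightarrow> convex_on {0..} f \<and> continuous_on {0..} f \<and> mono_on {0..} f \<and>
     (\<exists>D. (\<forall>x>0. (f has_real_derivative D x) (at x)) \<and> continuous_on {0<..} D) \<and>
     f 0 = 0"

definition min_rderiv0 :: "nat \<Rightarrow> (nat \<Rightarrow> real \<Rightarrow> real) \<Rightarrow> real" where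
  "min_rderiv0 N C = Min ((\<lambda>n. rderiv0 (C n)) ` {..<N})"

definition phi_fn :: "real \<Rightarrow> real" where
  "phi_fn cb = max ((2 - cb + sqrt (cb^2 - 4*cb + 12)) / 2) 1"

definition f_bound :: "real \<Rightarrow> real" where
  "f_bound cb = ((phi_fn cb)^2 + 2) / ((phi_fn cb)^2 + 2 * phi_fn cb + cb)"

end

theory Submission
  imports Defs
begin

lemma pp_cont:
  fixes \<alpha> Q \<beta> :: real
  assumes "\<beta> > 0"
  shows "continuous_on S (\<lambda>q. \<alpha> * max (Q - q) 0 powr \<beta>)"
  by (intro continuous_intros continuous_on_powr') (use assms in \<open>auto intro!: continuous_intros\<close>)

lemma pp_int:
  fixes \<alpha> Q \<beta> :: real
  assumes "\<beta> > 0"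
  shows "(\<lambda>q. \<alpha> * max (Q - q) 0 powr \<beta>) integrable_on {a..b}"
  by (rule integrable_continuous_interval[OF pp_cont[OF assms]])

lemma pp_mono:
  fixes \<alpha> Q \<beta> :: real
  assumes "\<beta> > 0" "\<alpha> \<ge> 0" "a \<le> b"
  shows "\<alpha> * max (Q - b) 0 powr \<beta> \<le> \<alpha> * max (Q - a) 0 powr \<beta>"
  using assms by (intro mult_left_mono powr_mono2) (auto simp: max_def)

lemma int_dec:
  fixes pp :: "real \<Rightarrow> real"
  assumes cont: "\<And>a b. pp integrable_on {a..b}"
    and mono: "\<And>a b. a \<le> b \<Longrightarrow> pp b \<le> pp a"
    and "0 \<le> Y" "0 \<le> Z"
  shows "integral {0..Y} pp - pp Z * Y \<le> integral {0..Z} pp - pp Z * Z"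
proof (cases "Y \<le> Z")
  case True
  have "integral {0..Y} pp + integral {Y..Z} pp = integral {0..Z} pp"
    using True assms by (intro Henstock_Kurzweil_Integration.integral_combine) (auto intro: cont)
  moreover have "integral {Y..Z} (\<lambda>_. pp Z) \<le> integral {Y..Z} pp"
    by (intro integral_le cont integrable_const_ivl mono) auto
  ultimately show ?thesis using True by (simp add: algebra_simps)
next
  case False
  have "integral {0..Z} pp + integral {Z..Y} pp = integral {0..Y} pp"
    using False assms by (intro Henstock_Kurzweil_Integration.integral_combine) (auto intro: cont)
  moreover have "integral {Z..Y} pp \<le> integral {Z..Y} (\<lambda>_. pp Z)"
    by (intro integral_le cont integrable_const_ivl mono) auto
  ultimately show ?thesis using False by (simp add: algebra_simps)
qed

lemma tangent_powr:
  fixes \<beta> s u :: real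
  assumes "\<beta> \<ge> 1" "s > 0" "u > 0"
  shows "\<beta> * s powr (\<beta> - 1) * (u - s) \<le> u powr \<beta> - s powr \<beta>"
proof -
  have "(\<beta> * s powr (\<beta> - 1)) * (u - s) \<le> u powr \<beta> - s powr \<beta>"
  proof (rule f''_imp_f'[where C="{0<..}" and f="\<lambda>x. x powr \<beta>" and f'="\<lambda>x. \<beta> * x powr (\<beta> - 1)"
        and f''="\<lambda>x. \<beta> * ((\<beta> - 1) * x powr (\<beta> - 1 - 1))"])
    show "convex {0::real<..}" by simp
    fix x :: real assume x: "x \<in> {0<..}"
    show "DERIV (\<lambda>x. x powr \<beta>) x :> \<beta> * x powr (\<beta> - 1)"
      using x by (auto intro!: derivative_eq_intros)
    show "DERIV (\<lambda>x. \<beta> * x powr (\<beta> - 1)) x :> \<beta> * ((\<beta> - 1) * x powr (\<beta> - 1 - 1))"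
      using x by (auto intro!: derivative_eq_intros)
    show "0 \<le> \<beta> * ((\<beta> - 1) * x powr (\<beta> - 1 - 1))"
      using x assms by auto
  qed (use assms in auto)
  then show ?thesis by simp
qed

lemma lin_integral:
  fixes a b d :: real
  assumes "0 \<le> Z"
  shows "((\<lambda>q. a + d * (Z - q)) has_integral (a * Z + d * Z^2 / 2)) {0..Z}"
proof -
  have "((\<lambda>q. a + d * (Z - q)) has_integral ((\<lambda>q. a * q + d * (Z * q - q^2/2)) Z - (\<lambda>q. a * q + d * (Z * q - q^2/2)) 0)) {0..Z}"
    using assms
    by (intro fundamental_theorem_of_calculus)
       (auto intro!: derivative_eq_intros simp: has_real_derivative_iff_has_vector_derivative[symmetric] algebra_simps)
  then show ?thesis by (simp add: power2_eq_square algebra_simps)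
qed


lemma phi_facts:
  fixes cb :: real
  defines "r \<equiv> sqrt (cb^2 - 4*cb + 12)"
  defines "\<phi>0 \<equiv> (2 - cb + r) / 2"
  shows "r^2 = cb^2 - 4*cb + 12" "\<phi>0^2 = (2 - cb) * \<phi>0 + 2" "phi_fn cb = max \<phi>0 1"
proof -
  have "cb^2 - 4*cb + 12 = (cb - 2)^2 + 8" by (simp add: power2_eq_square algebra_simps)
  then have "cb^2 - 4*cb + 12 \<ge> 0" by (smt (verit) zero_le_power2)
  then show r2: "r^2 = cb^2 - 4*cb + 12" unfolding r_def by simp
  show "\<phi>0^2 = (2 - cb) * \<phi>0 + 2" unfolding \<phi>0_def using r2
    by (simp add: power2_eq_square field_simps)
  show "phi_fn cb = max \<phi>0 1" unfolding phi_fn_def \<phi>0_def r_def ..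
qed

lemma f_bound_pos:
  fixes cb :: real
  assumes "cb \<ge> 0"
  shows "0 < f_bound cb" "f_bound cb \<le> 1"
proof -
  have p1: "phi_fn cb \<ge> 1" unfolding phi_fn_def by simp
  have den: "(phi_fn cb)^2 + 2 * phi_fn cb + cb > 0" using p1 assms
    by (smt (verit) zero_le_power2)
  show "0 < f_bound cb" unfolding f_bound_def using den
    by (smt (verit) divide_pos_pos zero_le_power2)
  show "f_bound cb \<le> 1" unfolding f_bound_def using den p1 assms
    by (simp add: divide_le_eq_1)
qed

lemma f_bound_key:
  fixes cb X t :: real
  assumes cb: "cb \<ge> 0" and t: "t > 0" and Xt: "X \<ge> t"
  shows "f_bound cb * (X^2 + 2*t*X + cb*t^2) \<le> X^2 + 2*t^2"
proof -
  define r where "r = sqrt (cb^2 - 4*cb + 12)"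
  define \<phi>0 where "\<phi>0 = (2 - cb + r) / 2"
  note pf = phi_facts[of cb, folded r_def, folded \<phi>0_def]
  have E: "X^2 + 2*t*X + cb*t^2 \<ge> 0" using cb t Xt by (simp add: add_nonneg_nonneg)
  show ?thesis
  proof (cases "\<phi>0 \<ge> 1")
    case True
    then have ph: "phi_fn cb = \<phi>0" using pf by simp
    have rel: "\<phi>0 * cb = 2*\<phi>0 + 2 - \<phi>0^2" using pf(2) by (simp add: algebra_simps)
    have fb: "f_bound cb = \<phi>0 / (\<phi>0 + 1)"
    proof -
      have d1: "\<phi>0^2 + 2*\<phi>0 + cb > 0" using True cb by (smt (verit) zero_le_power2)
      have "(\<phi>0^2 + 2) * (\<phi>0 + 1) = \<phi>0 * (\<phi>0^2 + 2*\<phi>0 + cb)"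
        using rel by (simp add: power2_eq_square algebra_simps)
      then show ?thesis unfolding f_bound_def ph using d1 True
        by (simp add: field_simps)
    qed
    have "\<phi>0 * (X^2 + 2*t*X + cb*t^2) = \<phi>0 * X^2 + 2*\<phi>0*t*X + (\<phi>0*cb)*t^2"
      by (simp add: algebra_simps)
    also have "\<dots> = \<phi>0 * X^2 + 2*\<phi>0*t*X + (2*\<phi>0 + 2 - \<phi>0^2)*t^2" by (simp add: rel)
    also have "\<dots> \<le> (\<phi>0 + 1) * (X^2 + 2*t^2)"
    proof -
      have "0 \<le> (X - \<phi>0*t)^2" by simp
      then show ?thesis by (simp add: power2_eq_square algebra_simps)
    qed
    finally have "\<phi>0 * (X^2 + 2*t*X + cb*t^2) \<le> (\<phi>0 + 1) * (X^2 + 2*t^2)" .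
    then show ?thesis unfolding fb using True
      by (simp add: field_simps)
  next
    case False
    then have ph: "phi_fn cb = 1" using pf by simp
    have "r < cb" using False unfolding \<phi>0_def by simp
    moreover have "r \<ge> 0" unfolding r_def
    proof -
      have "cb^2 - 4*cb + 12 = (cb - 2)^2 + 8" by (simp add: power2_eq_square algebra_simps)
      then show "sqrt (cb^2 - 4*cb + 12) \<ge> 0" by (smt (verit) real_sqrt_ge_zero zero_le_power2)
    qed
    ultimately have "r^2 < cb^2" by (simp add: power_strict_mono)
    then have cb3: "cb > 3" using pf(1) by linarith
    have fb: "f_bound cb = 3 / (3 + cb)" unfolding f_bound_def ph by simp
    have "(X - t) * (cb*(X+t) - 6*t) \<ge> 0"
    proof -
      have "cb*(X+t) \<ge> 3*(X+t)" using cb3 Xt t by (intro mult_right_mono) auto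
      then show ?thesis using Xt t by (intro mult_nonneg_nonneg) auto
    qed
    then have "3 * (X^2 + 2*t*X + cb*t^2) \<le> (3 + cb) * (X^2 + 2*t^2)"
      by (simp add: power2_eq_square algebra_simps)
    then show ?thesis unfolding fb using cb3 by (simp add: field_simps)
  qed
qed

lemma final_alg:
  fixes W D A P c X xk d L cbb f :: real
  assumes d: "d > 0" and Pc: "P > c"
    and W: "W \<ge> A + (P - c) * xk"
    and D: "D \<le> A + (P - c) * X + (P - c) * L / 2"
    and A: "A \<ge> d * X^2 / 2"
    and xk: "d * xk \<ge> P - c" "xk \<le> X"
    and L: "L * d \<le> (P - c) * cbb" "L \<ge> 0"
    and f: "0 \<le> f" "f \<le> 1"
    and key: "f * (X^2 + 2*((P-c)/d)*X + cbb*((P-c)/d)^2) \<le> X^2 + 2*((P-c)/d)^2"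
  shows "f * D \<le> W"
proof -
  define t where "t = (P - c) / d"
  have Pct: "P - c = d * t" unfolding t_def using d by simp
  have t0: "t > 0" unfolding t_def using d Pc by simp
  have xkt: "xk \<ge> t" unfolding t_def using xk d by (simp add: field_simps)
  have Lt: "L \<le> t * cbb" using L d unfolding t_def by (simp add: field_simps)
  have W2: "W \<ge> A + d * t^2"
  proof -
    have "(P - c) * xk \<ge> (P - c) * t" using xkt Pc by (intro mult_left_mono) auto
    then show ?thesis using W Pct by (simp add: power2_eq_square algebra_simps)
  qed
  have D2: "D \<le> A + d*t*X + d*t*(t*cbb) / 2"
  proof -
    have "(P - c) * L \<le> (P - c) * (t * cbb)" using Lt Pc by (intro mult_left_mono) auto
    then show ?thesis using D Pct by (simp add: algebra_simps)
  qed
  have fD: "f * D \<le> f * (A + d*t*X + d*t*(t*cbb) / 2)" using D2 f by (intro mult_left_mono) auto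
  have fA: "(1 - f) * A \<ge> (1 - f) * (d * X^2 / 2)" using A f by (intro mult_left_mono) auto
  have key2: "f * (X^2 + 2*t*X + cbb*t^2) \<le> X^2 + 2*t^2" using key unfolding t_def .
  have key3: "d/2 * (f * (X^2 + 2*t*X + cbb*t^2)) \<le> d/2 * (X^2 + 2*t^2)"
    using key2 d by (intro mult_left_mono) auto
  have id: "d/2 * (X^2 + 2*t^2) - d/2 * (f * (X^2 + 2*t*X + cbb*t^2))
      = ((A + d * t^2) - f * (A + d*t*X + d*t*(t*cbb) / 2)) - ((1 - f) * A - (1 - f) * (d * X^2 / 2))"
    by (simp add: power2_eq_square field_simps)
  show ?thesis using W2 fD fA key3 id by linarith
qed

lemma deriv_bound:
  fixes \<alpha> \<beta> Q Z xk c :: real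
  assumes a: "\<alpha> > 0" and b: "\<beta> \<ge> 1" and Z: "0 \<le> Z" and xk: "0 \<le> xk" and lt: "Z + xk < Q"
    and opt: "\<And>y. y \<ge> 0 \<Longrightarrow> y * (\<alpha> * max (Q - (Z + y)) 0 powr \<beta>) - c * y
                 \<le> xk * (\<alpha> * max (Q - (Z + xk)) 0 powr \<beta>) - c * xk"
  shows "\<alpha> * (Q - Z - xk) powr \<beta> - c \<le> \<alpha> * \<beta> * (Q - Z - xk) powr (\<beta> - 1) * xk"
proof (rule ccontr)
  assume neg: "\<not> ?thesis"
  define g where "g = (\<lambda>y. y * (\<alpha> * (Q - Z - y) powr \<beta>) - c * y)"
  have "DERIV g xk :> (\<alpha> * (Q - Z - xk) powr \<beta>) + xk * (\<alpha> * (\<beta> * (Q - Z - xk) powr (\<beta> - 1) * (-1))) - c"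
    unfolding g_def using lt
    by (auto intro!: derivative_eq_intros simp: algebra_simps)
  moreover have "0 < (\<alpha> * (Q - Z - xk) powr \<beta>) + xk * (\<alpha> * (\<beta> * (Q - Z - xk) powr (\<beta> - 1) * (-1))) - c"
    using neg by (simp add: algebra_simps)
  ultimately obtain \<delta> where \<delta>: "\<delta> > 0" "\<And>h. h > 0 \<Longrightarrow> h < \<delta> \<Longrightarrow> g xk < g (xk + h)"
    using DERIV_pos_inc_right by blast
  define h where "h = min \<delta> (Q - Z - xk) / 2"
  have "min \<delta> (Q - Z - xk) \<le> Q - Z - xk" by simp
  then have h: "h > 0" "h < \<delta>" "Z + xk + h < Q" unfolding h_def using \<delta> lt
    by (auto simp: min_def)
  have "g xk < g (xk + h)" using \<delta> h by auto
  moreover have "g xk = xk * (\<alpha> * max (Q - (Z + xk)) 0 powr \<beta>) - c * xk"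
    unfolding g_def using lt by (simp add: max_def algebra_simps)
  moreover have "g (xk + h) = (xk + h) * (\<alpha> * max (Q - (Z + (xk + h))) 0 powr \<beta>) - c * (xk + h)"
    unfolding g_def using h by (simp add: max_def algebra_simps)
  ultimately show False using opt[of "xk + h"] xk h by linarith
qed


lemma lin_integral2:
  fixes a b lo hi :: real
  assumes "lo \<le> hi"
  shows "((\<lambda>q. a + b * (hi - q)) has_integral (a * (hi - lo) + b * (hi - lo)^2 / 2)) {lo..hi}"
proof -
  have "((\<lambda>q. a + b * (hi - q)) has_integral ((\<lambda>q. a * q - b * (hi - q)^2/2) hi - (\<lambda>q. a * q - b * (hi - q)^2/2) lo)) {lo..hi}"
    using assms
    by (intro fundamental_theorem_of_calculus)
       (auto intro!: derivative_eq_intros simp: has_real_derivative_iff_has_vector_derivative[symmetric] field_simps)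
  then show ?thesis by (simp add: power2_eq_square algebra_simps)
qed

lemma int_tangent:
  fixes \<alpha> \<beta> Q Z :: real
  assumes a: "\<alpha> > 0" and b: "\<beta> \<ge> 1" and Z: "0 \<le> Z" "Z < Q"
  shows "integral {0..Z} (\<lambda>q. \<alpha> * max (Q - q) 0 powr \<beta>)
     \<ge> (\<alpha> * max (Q - Z) 0 powr \<beta>) * Z + \<alpha> * \<beta> * (Q - Z) powr (\<beta> - 1) * Z^2 / 2"
proof -
  let ?pp = "\<lambda>q. \<alpha> * max (Q - q) 0 powr \<beta>"
  have lin: "((\<lambda>q. ?pp Z + (\<alpha> * \<beta> * (Q - Z) powr (\<beta> - 1)) * (Z - q)) has_integral
      (?pp Z * (Z - 0) + (\<alpha> * \<beta> * (Q - Z) powr (\<beta> - 1)) * (Z - 0)^2 / 2)) {0..Z}"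
    by (rule lin_integral2) (use Z in auto)
  have int: "(?pp has_integral integral {0..Z} ?pp) {0..Z}"
    by (intro integrable_integral pp_int) (use b in auto)
  have "?pp Z * (Z - 0) + (\<alpha> * \<beta> * (Q - Z) powr (\<beta> - 1)) * (Z - 0)^2 / 2 \<le> integral {0..Z} ?pp"
  proof (rule has_integral_le[OF lin int])
    fix q assume q: "q \<in> {0..Z}"
    have tq: "\<beta> * (Q - Z) powr (\<beta> - 1) * ((Q - q) - (Q - Z)) \<le> (Q - q) powr \<beta> - (Q - Z) powr \<beta>"
      using q Z b by (intro tangent_powr) auto
    have "\<alpha> * (\<beta> * (Q - Z) powr (\<beta> - 1) * ((Q - q) - (Q - Z))) \<le> \<alpha> * ((Q - q) powr \<beta> - (Q - Z) powr \<beta>)"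
      using tq a by (intro mult_left_mono) auto
    moreover have "max (Q - q) 0 = Q - q" "max (Q - Z) 0 = Q - Z" using q Z by auto
    ultimately show "?pp Z + (\<alpha> * \<beta> * (Q - Z) powr (\<beta> - 1)) * (Z - q) \<le> ?pp q"
      by (simp add: algebra_simps)
  qed
  then show ?thesis by simp
qed

lemma int_chord:
  fixes \<alpha> \<beta> Q X XS :: real
  assumes a: "\<alpha> > 0" and b: "\<beta> \<ge> 1" and X: "X < XS" "XS < Q"
  shows "integral {X..XS} (\<lambda>q. \<alpha> * max (Q - q) 0 powr \<beta>)
     \<le> ((\<alpha> * max (Q - X) 0 powr \<beta>) + (\<alpha> * max (Q - XS) 0 powr \<beta>)) * (XS - X) / 2"
proof -
  let ?pp = "\<lambda>q. \<alpha> * max (Q - q) 0 powr \<beta>"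
  define L where "L = XS - X"
  have L: "L > 0" unfolding L_def using X by simp
  have lin: "((\<lambda>q. ?pp XS + ((?pp X - ?pp XS) / L) * (XS - q)) has_integral
      (?pp XS * (XS - X) + ((?pp X - ?pp XS) / L) * (XS - X)^2 / 2)) {X..XS}"
    by (rule lin_integral2) (use X in auto)
  have int: "(?pp has_integral integral {X..XS} ?pp) {X..XS}"
    by (intro integrable_integral pp_int) (use b in auto)
  have "integral {X..XS} ?pp \<le> ?pp XS * (XS - X) + ((?pp X - ?pp XS) / L) * (XS - X)^2 / 2"
  proof (rule has_integral_le[OF int lin])
    fix q assume q: "q \<in> {X..XS}"
    define \<theta> where "\<theta> = (XS - q) / L"
    have th: "0 \<le> \<theta>" "\<theta> \<le> 1" unfolding \<theta>_def using q L by (auto simp: L_def field_simps)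
    have tL: "\<theta> * L = XS - q" unfolding \<theta>_def using L by simp
    have "(1 - \<theta>) * (Q - XS) + \<theta> * (Q - X) = Q - XS + \<theta> * L"
      unfolding L_def by (simp add: algebra_simps)
    then have u: "Q - q = (1 - \<theta>) *\<^sub>R (Q - XS) + \<theta> *\<^sub>R (Q - X)"
      using tL by simp
    have cv: "(\<lambda>x. x powr \<beta>) ((1 - \<theta>) *\<^sub>R (Q - XS) + \<theta> *\<^sub>R (Q - X)) \<le> (1 - \<theta>) * (Q - XS) powr \<beta> + \<theta> * (Q - X) powr \<beta>"
      by (rule convex_onD[OF powr_convex[OF b]]) (use th X in auto)
    have "(Q - q) powr \<beta> \<le> (1 - \<theta>) * (Q - XS) powr \<beta> + \<theta> * (Q - X) powr \<beta>"
      using cv u by simp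
    then have "\<alpha> * (Q - q) powr \<beta> \<le> \<alpha> * ((1 - \<theta>) * (Q - XS) powr \<beta> + \<theta> * (Q - X) powr \<beta>)"
      using a by (intro mult_left_mono) auto
    moreover have "max (Q - q) 0 = Q - q" "max (Q - X) 0 = Q - X" "max (Q - XS) 0 = Q - XS" using q X by auto
    moreover have "((?pp X - ?pp XS) / L) * (XS - q) = (?pp X - ?pp XS) * \<theta>"
      unfolding \<theta>_def by simp
    ultimately show "?pp q \<le> ?pp XS + ((?pp X - ?pp XS) / L) * (XS - q)"
      by (simp add: algebra_simps)
  qed
  also have "\<dots> = (?pp X + ?pp XS) * (XS - X) / 2"
    using L unfolding L_def by (simp add: power2_eq_square field_simps)
  finally show ?thesis .
qed

lemma cost_lb:
  fixes f :: "real \<Rightarrow> real" and c y :: real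
  assumes A: "assm1 f" and d: "\<And>z. z > 0 \<Longrightarrow> c \<le> deriv f z" and y: "y \<ge> 0"
  shows "c * y \<le> f y"
proof (cases "y = 0")
  case True then show ?thesis using A by (simp add: assm1_def)
next
  case False
  then have y0: "y > 0" using y by simp
  from A obtain D where D: "\<And>x. x > 0 \<Longrightarrow> (f has_real_derivative D x) (at x)" and f0: "f 0 = 0"
    and cont: "continuous_on {0..} f" unfolding assm1_def by blast
  have "continuous_on {0..y} f" using cont by (rule continuous_on_subset) auto
  moreover have "\<And>x. 0 < x \<Longrightarrow> x < y \<Longrightarrow> f differentiable (at x)"
    using D real_differentiable_def by blast
  ultimately obtain l z where z: "0 < z" "z < y" "DERIV f z :> l" "f y - f 0 = (y - 0) * l"
    using MVT[OF y0] by blast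
  have "deriv f z = l" using z(3) by (rule DERIV_imp_deriv)
  then have "c \<le> l" using d z by auto
  then show ?thesis using z f0 y by (simp add: mult.commute mult_left_mono)
qed

lemma deriv_lin:
  fixes g :: "real \<Rightarrow> real"
  assumes "\<And>y. y \<ge> 0 \<Longrightarrow> g y = c * y" "z > 0"
  shows "deriv g z = c"
proof -
  have "((\<lambda>y. c * y) has_real_derivative c) (at z)" by (auto intro!: derivative_eq_intros)
  then have "(g has_real_derivative c) (at z)"
    by (rule has_field_derivative_transform_within_open[where S="{0<..}"]) (use assms in auto)
  then show ?thesis by (rule DERIV_imp_deriv)
qed



theorem mainTheorem16:
  fixes N :: nat and Q \<alpha> \<beta> c :: real and p :: "real \<Rightarrow> real"
    and C :: "nat \<Rightarrow> real \<Rightarrow> real" and k :: nat and x xS :: "nat \<Rightarrow> real"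
  assumes hQ: "Q > 0" and h\<alpha>: "\<alpha> > 0" and h\<beta>: "\<beta> \<ge> 1"
    and hp: "\<And>q. p q = (if q \<le> Q then \<alpha> * (Q - q) powr \<beta> else 0)"
    and A1: "\<And>n. n < N \<Longrightarrow> assm1 (C n)"
    and A3: "\<exists>R>0. p R \<le> min_rderiv0 N C"
    and A4: "p 0 > min_rderiv0 N C"
    and hk: "k < N"
    and hCk: "\<And>y. y \<ge> 0 \<Longrightarrow> C k y = c * y"
    and hc: "0 < c" "c < \<alpha> * Q powr \<beta>"
    and hbest: "\<And>m y. m < N \<Longrightarrow> y > 0 \<Longrightarrow> deriv (C k) y \<le> deriv (C m) y"
    and heq: "cournot_eq N p C x"
    and hopt: "social_opt N p C xS"
  shows "welfare N p C x / welfare N p C xS \<ge> f_bound ((p 0 / c) powr ((\<beta> - 1) / \<beta>))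
       \<and> welfare N p C x / welfare N p C xS \<ge> f_bound ((p (total N x) / c) powr ((\<beta> - 1) / \<beta>))"
  proof -
  define pp where "pp = (\<lambda>q. \<alpha> * max (Q - q) 0 powr \<beta>)"
  have p_eq: "\<And>q. p q = pp q" unfolding pp_def by (simp add: hp max_def)
  have pfun: "p = pp" by (rule ext) (rule p_eq)
  have b0: "\<beta> > 0" using h\<beta> by simp
  have pint: "\<And>a b. p integrable_on {a..b}" unfolding pfun pp_def by (rule pp_int[OF b0])
  have pmono: "\<And>a b. a \<le> b \<Longrightarrow> p b \<le> p a" unfolding pfun pp_def
    by (rule pp_mono) (use b0 h\<alpha> in auto)
  note idec = int_dec[of p, OF pint pmono]
  define s0 where "s0 = (c / \<alpha>) powr (1 / \<beta>)"
  have s0pos: "s0 > 0" unfolding s0_def using hc h\<alpha> by simp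
  have "c / \<alpha> < Q powr \<beta>" using hc h\<alpha> by (simp add: pos_divide_less_eq mult.commute)
  then have "s0 < (Q powr \<beta>) powr (1 / \<beta>)" unfolding s0_def
    by (intro powr_less_mono2) (use hc h\<alpha> b0 in auto)
  also have "\<dots> = Q" using hQ b0 by (simp add: powr_powr)
  finally have s0Q: "s0 < Q" .
  define XS where "XS = Q - s0"
  have XSpos: "XS > 0" "XS < Q" unfolding XS_def using s0Q s0pos by auto
  have s0b: "\<alpha> * s0 powr \<beta> = c" unfolding s0_def using hc h\<alpha> b0 by (simp add: powr_powr)
  have pXS: "p XS = c" unfolding p_eq pp_def XS_def using s0pos s0b by simp
  have Cn0: "\<And>n. n < N \<Longrightarrow> C n 0 = 0" using A1 by (simp add: assm1_def)
  have dk: "\<And>y. y > 0 \<Longrightarrow> deriv (C k) y = c" by (rule deriv_lin) (use hCk in auto)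
  have clb: "\<And>n y. n < N \<Longrightarrow> y \<ge> 0 \<Longrightarrow> c * y \<le> C n y"
  proof -
    fix n y assume n: "n < N" and y: "(y::real) \<ge> 0"
    show "c * y \<le> C n y"
    proof (rule cost_lb[OF A1[OF n] _ y])
      fix z :: real assume "z > 0"
      then show "c \<le> deriv (C n) z" using hbest[OF n, of z] dk by simp
    qed
  qed
  have xnn: "\<And>n. n < N \<Longrightarrow> 0 \<le> x n" using heq by (simp add: cournot_eq_def)
  define X where "X = total N x"
  have X0: "X \<ge> 0" unfolding X_def total_def using xnn by (intro sum_nonneg) auto
  have fin: "finite {..<N}" by simp
  have kin: "k \<in> {..<N}" using hk by simp
  have Xsplit: "X = x k + (\<Sum>n\<in>{..<N} - {k}. x n)"
    unfolding X_def total_def using sum.remove[OF fin kin, of x] .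
  have rest0: "(\<Sum>n\<in>{..<N} - {k}. x n) \<ge> 0" using xnn by (intro sum_nonneg) auto
  have xkX: "x k \<le> X" using Xsplit rest0 by simp
  have dev: "\<And>n. n < N \<Longrightarrow> C n (x n) \<le> p X * x n"
  proof -
    fix n assume n: "n < N"
    have "payoff N p C (x(n := 0)) n \<le> payoff N p C x n"
      using heq n by (simp add: cournot_eq_def)
    then show "C n (x n) \<le> p X * x n"
      using Cn0[OF n] unfolding payoff_def X_def by (simp add: mult.commute)
  qed
  have sumC1: "(\<Sum>n<N. C n (x n)) \<le> p X * X"
  proof -
    have "(\<Sum>n<N. C n (x n)) \<le> (\<Sum>n<N. p X * x n)" using dev by (intro sum_mono) auto
    also have "\<dots> = p X * X" unfolding X_def total_def by (simp add: sum_distrib_left)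
    finally show ?thesis .
  qed
  have sumC2: "(\<Sum>n<N. C n (x n)) \<le> p X * (X - x k) + c * x k"
  proof -
    have "(\<Sum>n<N. C n (x n)) = C k (x k) + (\<Sum>n\<in>{..<N} - {k}. C n (x n))"
      using sum.remove[OF fin kin, of "\<lambda>n. C n (x n)"] .
    also have "\<dots> \<le> c * x k + (\<Sum>n\<in>{..<N} - {k}. p X * x n)"
      using hCk[OF xnn[OF hk]] dev by (intro add_mono sum_mono) auto
    also have "\<dots> = p X * (X - x k) + c * x k" using Xsplit by (simp add: sum_distrib_left)
    finally show ?thesis .
  qed
  have Wx: "welfare N p C x = integral {0..X} p - (\<Sum>n<N. C n (x n))"
    unfolding welfare_def X_def ..
  define D where "D = integral {0..XS} p - c * XS"
  have WS_le: "welfare N p C xS \<le> D"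
  proof -
    define Y where "Y = total N xS"
    have ynn: "\<And>n. n < N \<Longrightarrow> 0 \<le> xS n" using hopt by (simp add: social_opt_def)
    have Y0: "Y \<ge> 0" unfolding Y_def total_def using ynn by (intro sum_nonneg) auto
    have "c * Y = (\<Sum>n<N. c * xS n)" unfolding Y_def total_def by (simp add: sum_distrib_left)
    also have "\<dots> \<le> (\<Sum>n<N. C n (xS n))" using clb ynn by (intro sum_mono) auto
    finally have "c * Y \<le> (\<Sum>n<N. C n (xS n))" .
    then have "welfare N p C xS \<le> integral {0..Y} p - p XS * Y"
      unfolding welfare_def Y_def[symmetric] pXS by simp
    also have "\<dots> \<le> integral {0..XS} p - p XS * XS" using idec Y0 XSpos by simp
    finally show ?thesis unfolding D_def pXS .
  qed
  have WS_ge: "D \<le> welfare N p C xS"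
  proof -
    define e where "e = (\<lambda>n::nat. if n = k then XS else 0)"
    have enn: "\<forall>n<N. 0 \<le> e n" unfolding e_def using XSpos by simp
    have te: "total N e = XS" unfolding total_def e_def using hk by simp
    have "(\<Sum>n<N. C n (e n)) = (\<Sum>n<N. if n = k then c * XS else 0)"
      by (rule sum.cong) (use Cn0 hCk XSpos in \<open>auto simp: e_def\<close>)
    also have "\<dots> = c * XS" using hk by simp
    finally have "welfare N p C e = D" unfolding welfare_def te D_def by simp
    moreover have "welfare N p C e \<le> welfare N p C xS" using hopt enn by (simp add: social_opt_def)
    ultimately show ?thesis by simp
  qed
  have Dpos: "D > 0"
  proof -
    have "integral {0..XS} pp \<ge> pp XS * XS + \<alpha> * \<beta> * (Q - XS) powr (\<beta> - 1) * XS^2 / 2"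
      unfolding pp_def by (rule int_tangent) (use h\<alpha> h\<beta> XSpos in auto)
    moreover have "\<alpha> * \<beta> * (Q - XS) powr (\<beta> - 1) * XS^2 / 2 > 0"
      using h\<alpha> b0 XSpos by simp
    moreover have "pp XS * XS = c * XS" using pXS by (simp add: pfun)
    ultimately show ?thesis unfolding D_def pfun by linarith
  qed
  have WSpos: "welfare N p C xS > 0" using WS_ge Dpos by simp
  define cb2 where "cb2 = (p X / c) powr ((\<beta> - 1) / \<beta>)"
  have main: "f_bound cbb * D \<le> welfare N p C x" if cbb: "cbb \<ge> 0" "cbb \<ge> cb2" for cbb
  proof (cases "p X \<le> c")
    case True
    have "D \<le> integral {0..XS} p - p X * XS" unfolding D_def using True XSpos
      by (simp add: mult_right_mono)
    also have "\<dots> \<le> integral {0..X} p - p X * X" using idec X0 XSpos by simp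
    also have "\<dots> \<le> welfare N p C x" unfolding Wx using sumC1 by simp
    finally have "D \<le> welfare N p C x" .
    moreover have "f_bound cbb * D \<le> D" using f_bound_pos[OF cbb(1)] Dpos
      by (simp add: mult_le_cancel_right1)
    ultimately show ?thesis by simp
  next
    case False
    then have Pc: "p X > c" by simp
    have XQ: "X < Q"
    proof (rule ccontr)
      assume "\<not> X < Q"
      then have "p X = 0" unfolding p_eq pp_def using b0 by (simp add: max_def)
      then show False using Pc hc by simp
    qed
    have XXS: "X < XS"
    proof (rule ccontr)
      assume "\<not> X < XS"
      then have "p X \<le> p XS" by (intro pmono) simp
      then show False using Pc pXS by simp
    qed
    define s where "s = Q - X"
    have s0s: "s0 < s" "s > 0" unfolding s_def using XXS s0pos unfolding XS_def by auto
    define P where "P = p X"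
    have PX: "P = \<alpha> * s powr \<beta>" unfolding P_def p_eq pp_def s_def using XQ by simp
    define d where "d = \<alpha> * \<beta> * s powr (\<beta> - 1)"
    define d0 where "d0 = \<alpha> * \<beta> * s0 powr (\<beta> - 1)"
    have dpos: "d > 0" unfolding d_def using h\<alpha> b0 s0s by simp
    define L where "L = XS - X"
    have Ls: "L = s - s0" unfolding L_def XS_def s_def by simp
    define Z where "Z = X - x k"
    have Z0: "Z \<ge> 0" unfolding Z_def using xkX by simp
    have F4: "P - c \<le> d * x k"
    proof -
      have "\<alpha> * (Q - Z - x k) powr \<beta> - c \<le> \<alpha> * \<beta> * (Q - Z - x k) powr (\<beta> - 1) * x k"
      proof (rule deriv_bound[OF h\<alpha> h\<beta> Z0 xnn[OF hk]])
        show "Z + x k < Q" unfolding Z_def using XQ by simp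
        fix y :: real assume y: "y \<ge> 0"
        have "payoff N p C (x(k := y)) k \<le> payoff N p C x k"
          using heq hk y by (simp add: cournot_eq_def)
        moreover have "total N (x(k := y)) = Z + y"
        proof -
          have "total N (x(k := y)) = (x(k := y)) k + (\<Sum>n\<in>{..<N} - {k}. (x(k := y)) n)"
            unfolding total_def using sum.remove[OF fin kin] .
          also have "(\<Sum>n\<in>{..<N} - {k}. (x(k := y)) n) = (\<Sum>n\<in>{..<N} - {k}. x n)"
            by (rule sum.cong) auto
          finally have T: "total N (x(k := y)) = y + (\<Sum>n\<in>{..<N} - {k}. x n)"
            by (simp only: fun_upd_same)
          show ?thesis using T Xsplit unfolding Z_def by linarith
        qed
        ultimately have "y * p (Z + y) - c * y \<le> x k * p X - c * x k"
          unfolding payoff_def X_def[symmetric] using hCk y hCk[OF xnn[OF hk]] by simp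
        then show "y * (\<alpha> * max (Q - (Z + y)) 0 powr \<beta>) - c * y
                 \<le> x k * (\<alpha> * max (Q - (Z + x k)) 0 powr \<beta>) - c * x k"
          unfolding p_eq pp_def Z_def by simp
      qed
      moreover have "Q - Z - x k = s" unfolding Z_def s_def by simp
      ultimately show ?thesis unfolding PX d_def by (simp add: algebra_simps)
    qed
    have F1: "integral {0..X} p \<ge> P * X + d * X^2 / 2"
    proof -
      have "integral {0..X} pp \<ge> pp X * X + \<alpha> * \<beta> * (Q - X) powr (\<beta> - 1) * X^2 / 2"
        unfolding pp_def by (rule int_tangent) (use h\<alpha> h\<beta> X0 XQ in auto)
      then show ?thesis unfolding P_def d_def s_def pfun by simp
    qed
    have F2: "integral {X..XS} p \<le> (P + c) * L / 2"
    proof -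
      have "integral {X..XS} pp \<le> (pp X + pp XS) * (XS - X) / 2"
        unfolding pp_def by (rule int_chord) (use h\<alpha> h\<beta> XXS XSpos in auto)
      then show ?thesis unfolding P_def L_def pfun using pXS[unfolded pfun] by simp
    qed
    have comb: "integral {0..X} p + integral {X..XS} p = integral {0..XS} p"
      by (rule Henstock_Kurzweil_Integration.integral_combine) (use X0 XXS pint in auto)
    have F3: "d0 * L \<le> P - c"
    proof -
      have "\<beta> * s0 powr (\<beta> - 1) * (s - s0) \<le> s powr \<beta> - s0 powr \<beta>"
        by (rule tangent_powr) (use h\<beta> s0pos s0s in auto)
      then have "\<alpha> * (\<beta> * s0 powr (\<beta> - 1) * (s - s0)) \<le> \<alpha> * (s powr \<beta> - s0 powr \<beta>)"
        using h\<alpha> by (intro mult_left_mono) auto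
      then show ?thesis unfolding d0_def Ls PX using s0b by (simp add: algebra_simps)
    qed
    have cb2eq: "cb2 = (s / s0) powr (\<beta> - 1)"
    proof -
      have "p X / c = (s / s0) powr \<beta>"
        using PX s0s s0pos h\<alpha> unfolding P_def s0b[symmetric] by (simp add: powr_divide)
      then show ?thesis unfolding cb2_def using b0 by (simp add: powr_powr)
    qed
    have dd0: "d = cb2 * d0" unfolding cb2eq d_def d0_def using s0s s0pos
      by (simp add: powr_divide)
    have LdP: "L * d \<le> (P - c) * cbb"
    proof -
      have d00: "d0 \<ge> 0" unfolding d0_def using h\<alpha> b0 by simp
      have cb20: "cb2 \<ge> 0" unfolding cb2_def by simp
      have "L * d = cb2 * (d0 * L)" unfolding dd0 by simp
      also have "\<dots> \<le> cb2 * (P - c)" using F3 cb20 by (intro mult_left_mono) auto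
      also have "\<dots> \<le> cbb * (P - c)" using cbb Pc unfolding P_def by (intro mult_right_mono) auto
      finally show ?thesis by (simp add: mult.commute)
    qed
    have L0: "L \<ge> 0" unfolding L_def using XXS by simp
    have "d * x k \<le> d * X" using xkX dpos by (intro mult_left_mono) auto
    then have "P - c \<le> X * d" using F4 by (simp add: mult.commute)
    then have t_le: "(P - c) / d \<le> X" using dpos by (simp add: pos_divide_le_eq)
    have tpos: "(P - c) / d > 0" using Pc dpos unfolding P_def by simp
    have key: "f_bound cbb * (X^2 + 2*((P-c)/d)*X + cbb*((P-c)/d)^2) \<le> X^2 + 2*((P-c)/d)^2"
      by (rule f_bound_key[OF cbb(1) tpos t_le])
    show ?thesis
    proof (rule final_alg[OF dpos _ _ _ _ F4[simplified mult.commute] xkX LdP L0 _ _ key])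
      show "c < P" using Pc unfolding P_def .
      show "welfare N p C x \<ge> (integral {0..X} p - P * X) + (P - c) * x k"
        unfolding Wx P_def using sumC2 by (simp add: algebra_simps)
      show "D \<le> (integral {0..X} p - P * X) + (P - c) * X + (P - c) * L / 2"
      proof -
        have e1: "(P + c) * L / 2 = (P - c) * L / 2 + c * L" by (simp add: field_simps)
        have e2: "c * XS = c * X + c * L" unfolding L_def by (simp add: algebra_simps)
        have e3: "(P - c) * X = P * X - c * X" by (simp add: algebra_simps)
        show ?thesis unfolding D_def using F2 comb e1 e2 e3 by linarith
      qed
      show "integral {0..X} p - P * X \<ge> d * X^2 / 2" using F1 by simp
      show "0 \<le> f_bound cbb" "f_bound cbb \<le> 1" using f_bound_pos[OF cbb(1)] by auto
    qed
  qed
  define cb1 where "cb1 = (p 0 / c) powr ((\<beta> - 1) / \<beta>)"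
  have cb20: "cb2 \<ge> 0" unfolding cb2_def by simp
  have cb12: "cb2 \<le> cb1" unfolding cb1_def cb2_def
  proof (rule powr_mono2)
    show "0 \<le> (\<beta> - 1) / \<beta>" using h\<beta> by simp
    have "0 \<le> p X" unfolding p_eq pp_def using h\<alpha> by simp
    then show "0 \<le> p X / c" using hc by simp
    show "p X / c \<le> p 0 / c" using pmono[OF X0] hc by (simp add: divide_right_mono)
  qed
  have R: "f_bound cbb \<le> welfare N p C x / welfare N p C xS" if "cbb \<ge> 0" "cbb \<ge> cb2" for cbb
  proof -
    have "f_bound cbb * welfare N p C xS \<le> f_bound cbb * D"
      using WS_le f_bound_pos[OF that(1)] by (intro mult_left_mono) auto
    also have "\<dots> \<le> welfare N p C x" by (rule main[OF that])
    finally show ?thesis using WSpos by (simp add: pos_le_divide_eq)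
  qed
  show ?thesis
    using R[of cb1] R[of cb2] cb20 cb12 unfolding cb1_def cb2_def X_def by auto
qed

end
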